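(* Let $G$ be a finite abelian group and $S\subset G$ a partial symmetric Sidon set with center $0$. If $T\subset G$ is a subset with $T\cap(-T)=\emptyset$, then $S\cap T$ is a Sidon set.
   Context: A subset $S\subset G$ is a Sidon set if every solution $(\alpha,\beta,\gamma,\delta)\in S^4$ of $\alpha+\beta=\gamma+\delta$ satisfies $\alpha\in\{\gamma,\delta\}$. $S$ is a partial symmetric Sidon set with center $a_0\in S$ if every solution $(\alpha,\beta,\gamma,\delta)\in S^4$ of $\alpha+\beta=\gamma+\delta$ satisfies either $\alpha\in\{\gamma,\delta\}$ or $\alpha+\beta=\gamma+\delta=a_0$. *)

theory Defs
  imports Main
begin

definition sidon_set :: "'a::ab_group_add set \<Rightarrow> bool" where
  "sidon_set S \<longleftrightarrow>
     (\<forall>\<alpha>\<in>S. \<forall>\<beta>\<in>S. \<forall>\<gamma>\<in>S. \<forall>\<delta>\<in>S.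
        \<alpha> + \<beta> = \<gamma> + \<delta> \<longrightarrow> \<alpha> \<in> {\<gamma>, \<delta>})"

definition partial_symmetric_sidon :: "'a::ab_group_add set \<Rightarrow> 'a \<Rightarrow> bool" where
  "partial_symmetric_sidon S a0 \<longleftrightarrow> a0 \<in> S \<and>
     (\<forall>\<alpha>\<in>S. \<forall>\<beta>\<in>S. \<forall>\<gamma>\<in>S. \<forall>\<delta>\<in>S.
        \<alpha> + \<beta> = \<gamma> + \<delta> \<longrightarrow>
          \<alpha> \<in> {\<gamma>, \<delta>} \<or> (\<alpha> + \<beta> = a0 \<and> \<gamma> + \<delta> = a0))"

end

theory Submission
  imports Defs
begin

theorem lemma5p1:
  fixes S T :: "'a::{finite, ab_group_add} set"
  assumes "partial_symmetric_sidon S 0"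
    and "T \<inter> uminus ` T = {}"
  shows "sidon_set (S \<inter> T)"
  unfolding sidon_set_def
proof (intro ballI impI)
  fix a b c d assume h: "a \<in> S \<inter> T" "b \<in> S \<inter> T" "c \<in> S \<inter> T" "d \<in> S \<inter> T"
    and e: "a + b = c + d"
  have nz: "a + b \<noteq> 0"
  proof
    assume "a + b = 0"
    then have "a = - b" by (simp add: eq_neg_iff_add_eq_0)
    then have "a \<in> uminus ` T" using h by auto
    then show False using h assms(2) by blast
  qed
  show "a \<in> {c, d}" using assms(1) h e nz unfolding partial_symmetric_sidon_def by blast
qed

end
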